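(* Let $\mathcal{A}$ be a finite real linear hyperplane arrangement, $B$ a region, and $\Delta\subseteq\Sigma[\mathcal{A}]$ a nonempty polyhedral subcomplex. Let $\operatorname{Des}_B(\Delta)=\{F\in\Sigma[\mathcal{A}]: F\overline{B}\in\Delta\}$ and $\mathcal{R}(\Delta)=\Delta\cap\mathcal{R}[\mathcal{A}]$. Then $\operatorname{Des}_B(\Delta)=\Delta$ if and only if $\Delta$ is pure and $\mathcal{R}(\Delta)$ is a nonempty upper set of the partial order $\preceq_B$.
   Context: $\Sigma[\mathcal{A}]$ is the set of faces of $\mathcal{A}$ (faces of the regions, which are closures of connected components of the complement of $\bigcup\mathcal{A}$), and $\mathcal{R}[\mathcal{A}]$ is the set of regions. A polyhedral subcomplex is a subset of $\Sigma[\mathcal{A}]$ closed under taking faces; it is pure if all its maximal elements have the same dimension. For each $\mathrm{H}\in\mathcal{A}$ fix halfspaces $\mathrm{H}^\pm$; the sign sequence $\sigma_{\mathrm{H}}(F)\in\{0,+,-\}$ records whether $F\subseteq \mathrm{H}$, or $F$ lies in $\mathrm{H}^+$ resp. $\mathrm{H}^-$ but not in $\mathrm{H}$. The Tits product $FG$ is the face with $\sigma_{\mathrm{H}}(FG)=\sigma_{\mathrm{H}}(F)$ if nonzero, else $\sigma_{\mathrm{H}}(G)$. $\overline{B}=-B$. The weak order with base region $B$: $C\preceq_B D$ iff the set of hyperplanes separating $B$ and $C$ is contained in the set separating $B$ and $D$. *)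

theory Defs
  imports "HOL-Analysis.Analysis"
begin

definition linear_hyperplane :: "'a::euclidean_space set \<Rightarrow> bool" where
  "linear_hyperplane H \<longleftrightarrow> (\<exists>a. a \<noteq> 0 \<and> H = {x. a \<bullet> x = 0})"

definition arrangement :: "'a::euclidean_space set set \<Rightarrow> bool" where
  "arrangement A \<longleftrightarrow> finite A \<and> (\<forall>H\<in>A. linear_hyperplane H)"

definition normal :: "'a::euclidean_space set \<Rightarrow> 'a" where
  "normal H = (SOME a. a \<noteq> 0 \<and> H = {x. a \<bullet> x = 0})"

definition hplus :: "'a::euclidean_space set \<Rightarrow> 'a set" where
  "hplus H = {x. normal H \<bullet> x \<ge> 0}"

definition hminus :: "'a::euclidean_space set \<Rightarrow> 'a set" where
  "hminus H = {x. normal H \<bullet> x \<le> 0}"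

definition regions :: "'a::euclidean_space set set \<Rightarrow> 'a set set" where
  "regions A = closure ` components (- \<Union>A)"

definition faces :: "'a::euclidean_space set set \<Rightarrow> 'a set set" where
  "faces A = {F. F \<noteq> {} \<and> (\<exists>R\<in>regions A. F face_of R)}"

datatype sgn = Zero | Pos | Neg

definition sigma :: "'a::euclidean_space set \<Rightarrow> 'a set \<Rightarrow> sgn" where
  "sigma H F = (if F \<subseteq> H then Zero else if F \<subseteq> hplus H then Pos else Neg)"

definition tits :: "'a::euclidean_space set set \<Rightarrow> 'a set \<Rightarrow> 'a set \<Rightarrow> 'a set" where
  "tits A F G = (THE K. K \<in> faces A \<and>
     (\<forall>H\<in>A. sigma H K = (if sigma H F \<noteq> Zero then sigma H F else sigma H G)))"

definition opp :: "'a::euclidean_space set \<Rightarrow> 'a set" where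
  "opp B = uminus ` B"

definition separating :: "'a::euclidean_space set set \<Rightarrow> 'a set \<Rightarrow> 'a set \<Rightarrow> 'a set set" where
  "separating A C D = {H\<in>A. sigma H C \<noteq> sigma H D}"

definition weak_le :: "'a::euclidean_space set set \<Rightarrow> 'a set \<Rightarrow> 'a set \<Rightarrow> 'a set \<Rightarrow> bool" where
  "weak_le A B C D \<longleftrightarrow> separating A B C \<subseteq> separating A B D"

definition subcomplex :: "'a::euclidean_space set set \<Rightarrow> 'a set set \<Rightarrow> bool" where
  "subcomplex A \<Delta> \<longleftrightarrow> \<Delta> \<subseteq> faces A \<and>
     (\<forall>F\<in>\<Delta>. \<forall>G\<in>faces A. G face_of F \<longrightarrow> G \<in> \<Delta>)"

definition pure :: "'a::euclidean_space set set \<Rightarrow> bool" where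
  "pure \<Delta> \<longleftrightarrow> (\<forall>F\<in>\<Delta>. \<forall>G\<in>\<Delta>.
     (\<forall>K\<in>\<Delta>. F \<subseteq> K \<longrightarrow> K = F) \<and> (\<forall>K\<in>\<Delta>. G \<subseteq> K \<longrightarrow> K = G)
       \<longrightarrow> aff_dim F = aff_dim G)"

definition Des :: "'a::euclidean_space set set \<Rightarrow> 'a set \<Rightarrow> 'a set set \<Rightarrow> 'a set set" where
  "Des A B \<Delta> = {F\<in>faces A. tits A F (opp B) \<in> \<Delta>}"

definition upper_set :: "'a::euclidean_space set set \<Rightarrow> 'a set \<Rightarrow> 'a set set \<Rightarrow> bool" where
  "upper_set A B S \<longleftrightarrow> S \<subseteq> regions A \<and>
     (\<forall>C\<in>S. \<forall>D\<in>regions A. weak_le A B C D \<longrightarrow> D \<in> S)"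

end

theory Submission
  imports Defs
begin

definition sv :: "'a::euclidean_space set \<Rightarrow> 'a \<Rightarrow> sgn" where
  "sv H x = (if normal H \<bullet> x = 0 then Zero else if normal H \<bullet> x > 0 then Pos else Neg)"

definition cl :: "'a::euclidean_space set \<Rightarrow> sgn \<Rightarrow> 'a set" where
  "cl H s = (case s of Zero \<Rightarrow> {y. normal H \<bullet> y = 0} | Pos \<Rightarrow> {y. normal H \<bullet> y \<ge> 0}
     | Neg \<Rightarrow> {y. normal H \<bullet> y \<le> 0})"

definition KK :: "'a::euclidean_space set set \<Rightarrow> ('a set \<Rightarrow> sgn) \<Rightarrow> 'a set" where
  "KK A s = {y. \<forall>H\<in>A. y \<in> cl H (s H)}"

fun flip :: "sgn \<Rightarrow> sgn" where
  "flip Zero = Zero" | "flip Pos = Neg" | "flip Neg = Pos"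

lemma nH:
  assumes "arrangement A" "H \<in> A"
  shows "normal H \<noteq> 0 \<and> H = {x. normal H \<bullet> x = 0}"
proof -
  from assms obtain a where "a \<noteq> 0 \<and> H = {x. a \<bullet> x = 0}"
    unfolding arrangement_def linear_hyperplane_def by blast
  then show ?thesis unfolding normal_def by (rule someI)
qed

lemma sv_mem: "x \<in> KK A (\<lambda>H. sv H x)"
  unfolding KK_def cl_def sv_def by auto

lemma sv_cl: "x \<in> cl H s \<Longrightarrow> sv H x \<noteq> Zero \<Longrightarrow> sv H x = s"
  unfolding cl_def sv_def by (cases s) auto

lemma KK_cong: "(\<And>H. H \<in> A \<Longrightarrow> s H = t H) \<Longrightarrow> KK A s = KK A t"
  unfolding KK_def by auto

lemma KK_sub_cl: "H \<in> A \<Longrightarrow> KK A s \<subseteq> cl H (s H)"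
  unfolding KK_def by auto

lemma convex_cl: "convex (cl H s)"
  unfolding cl_def by (cases s) (auto intro: convex_hyperplane convex_halfspace_ge convex_halfspace_le)

lemma closed_cl: "closed (cl H s)"
  unfolding cl_def by (cases s) (auto intro: closed_hyperplane closed_halfspace_ge closed_halfspace_le)

lemma KK_Inter: "KK A s = (\<Inter>H\<in>A. cl H (s H))"
  unfolding KK_def by auto

lemma convex_KK: "convex (KK A s)"
  unfolding KK_Inter by (auto intro!: convex_INT convex_cl)

lemma closed_KK: "closed (KK A s)"
  unfolding KK_Inter by (auto intro!: closed_INT closed_cl)

lemma sigma_KK:
  assumes "arrangement A" "H \<in> A"
  shows "sigma H (KK A (\<lambda>H. sv H x)) = sv H x"
proof -
  have H: "H = {x. normal H \<bullet> x = 0}" using nH[OF assms] by blast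
  have x: "x \<in> KK A (\<lambda>H. sv H x)" by (rule sv_mem)
  have sub: "KK A (\<lambda>H. sv H x) \<subseteq> cl H (sv H x)" using KK_sub_cl[OF assms(2)] .
  show ?thesis
  proof (cases "sv H x")
    case Zero
    then have "KK A (\<lambda>H. sv H x) \<subseteq> H" using sub H by (simp add: cl_def)
    then show ?thesis using Zero by (simp add: sigma_def)
  next
    case Pos
    then have "KK A (\<lambda>H. sv H x) \<subseteq> hplus H" using sub by (simp add: cl_def hplus_def)
    moreover have "x \<notin> H" using Pos by (subst H) (auto simp: sv_def split: if_splits)
    ultimately show ?thesis using Pos x by (auto simp: sigma_def)
  next
    case Neg
    have "x \<notin> H" using Neg by (subst H) (auto simp: sv_def split: if_splits)
    have "x \<notin> hplus H" using Neg by (auto simp: sv_def hplus_def split: if_splits)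
    then show ?thesis using Neg x \<open>x \<notin> H\<close> by (auto simp: sigma_def)
  qed
qed

lemma flip_sv: "sv H (-x) = flip (sv H x)"
  unfolding sv_def by (simp add: inner_minus_right)

lemma cl_mono: "t = Zero \<or> t = s \<Longrightarrow> cl H t \<subseteq> cl H s"
  unfolding cl_def by (cases s; cases t) auto

lemma KK_mono: "(\<And>H. H \<in> A \<Longrightarrow> t H = Zero \<or> t H = s H) \<Longrightarrow> KK A t \<subseteq> KK A s"
proof
  fix y assume "\<And>H. H \<in> A \<Longrightarrow> t H = Zero \<or> t H = s H" "y \<in> KK A t"
  then show "y \<in> KK A s" unfolding KK_def using cl_mono[of "t H" "s H" H for H] by blast
qed

lemma KK_hyp_face:
  assumes "H \<in> A"
  shows "KK A s \<inter> {y. normal H \<bullet> y = 0} face_of KK A s"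
proof (cases "s H")
  case Zero
  show ?thesis
    by (rule face_of_Int_supporting_hyperplane_le[OF convex_KK])
       (use KK_sub_cl[OF assms, of s] Zero in \<open>auto simp: cl_def\<close>)
next
  case Pos
  have "KK A s \<inter> {y. (- normal H) \<bullet> y = 0} face_of KK A s"
    by (rule face_of_Int_supporting_hyperplane_le[OF convex_KK])
       (use KK_sub_cl[OF assms, of s] Pos in \<open>auto simp: cl_def\<close>)
  then show ?thesis by simp
next
  case Neg
  show ?thesis
    by (rule face_of_Int_supporting_hyperplane_le[OF convex_KK])
       (use KK_sub_cl[OF assms, of s] Neg in \<open>auto simp: cl_def\<close>)
qed

lemma KK_face:
  assumes "\<And>H. H \<in> A \<Longrightarrow> t H = Zero \<or> t H = s H"
  shows "KK A t face_of KK A s"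
proof -
  let ?S = "KK A s"
  define Fs where "Fs = insert ?S ((\<lambda>H. ?S \<inter> {y. normal H \<bullet> y = 0}) ` {H\<in>A. t H = Zero})"
  have eq: "KK A t = \<Inter>Fs"
  proof (rule set_eqI, rule iffI)
    fix y assume y: "y \<in> KK A t"
    then have "y \<in> ?S" using KK_mono[of A t s] assms by (meson subsetD)
    moreover have "normal H \<bullet> y = 0" if "H \<in> A" "t H = Zero" for H
    proof -
      have "y \<in> cl H (t H)" using y that(1) by (simp add: KK_def)
      then show ?thesis using that(2) by (simp add: cl_def)
    qed
    ultimately show "y \<in> \<Inter>Fs" unfolding Fs_def by auto
  next
    fix y assume y: "y \<in> \<Inter>Fs"
    show "y \<in> KK A t" unfolding KK_def
    proof (intro CollectI ballI)
      fix H assume H: "H \<in> A"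
      show "y \<in> cl H (t H)"
      proof (cases "t H = Zero")
        case True
        then have "y \<in> ?S \<inter> {y. normal H \<bullet> y = 0}" using y H unfolding Fs_def by blast
        then show ?thesis using True by (simp add: cl_def)
      next
        case False
        then have "t H = s H" using assms H by blast
        moreover have "y \<in> ?S" using y unfolding Fs_def by blast
        ultimately show ?thesis using KK_sub_cl[OF H, of s] by auto
      qed
    qed
  qed
  have f: "?S \<inter> {y. normal H \<bullet> y = 0} face_of ?S" if "H \<in> A" for H
    using KK_hyp_face[OF that] .
  have "\<Inter>Fs face_of ?S"
  proof (rule face_of_Inter)
    show "Fs \<noteq> {}" unfolding Fs_def by blast
    fix T assume "T \<in> Fs"
    then show "T face_of ?S" unfolding Fs_def using f face_of_refl[OF convex_KK] by blast
  qed
  then show ?thesis using eq by simp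
qed

definition OC :: "'a::euclidean_space set set \<Rightarrow> 'a \<Rightarrow> 'a set" where
  "OC A x = {y. \<forall>H\<in>A. sv H y = sv H x}"

lemma memH:
  assumes "arrangement A" "H \<in> A"
  shows "x \<in> H \<longleftrightarrow> normal H \<bullet> x = 0"
proof -
  have e: "H = {x. normal H \<bullet> x = 0}" using nH[OF assms] by blast
  have "x \<in> H \<longleftrightarrow> x \<in> {x. normal H \<bullet> x = 0}" by (rule arg_cong[where f="\<lambda>S. x \<in> S", OF e])
  then show ?thesis by simp
qed

lemma memU:
  assumes "arrangement A"
  shows "x \<in> - \<Union>A \<longleftrightarrow> (\<forall>H\<in>A. sv H x \<noteq> Zero)"
proof -
  have "x \<in> H \<longleftrightarrow> sv H x = Zero" if "H \<in> A" for H
    using memH[OF assms that] by (simp add: sv_def)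
  then show ?thesis by blast
qed

definition half :: "'a::euclidean_space set \<Rightarrow> sgn \<Rightarrow> 'a set" where
  "half H s = (if s = Pos then {y. normal H \<bullet> y > 0} else {y. normal H \<bullet> y < 0})"

lemma half_iff: "sv H x \<noteq> Zero \<Longrightarrow> sv H y = sv H x \<longleftrightarrow> y \<in> half H (sv H x)"
  by (cases "sv H x") (auto simp: half_def sv_def)

lemma OC_Inter:
  assumes "\<forall>H\<in>A. sv H x \<noteq> Zero"
  shows "OC A x = (\<Inter>H\<in>A. half H (sv H x))"
proof (rule set_eqI)
  fix y
  have "y \<in> OC A x \<longleftrightarrow> (\<forall>H\<in>A. sv H y = sv H x)" by (simp add: OC_def)
  also have "\<dots> \<longleftrightarrow> (\<forall>H\<in>A. y \<in> half H (sv H x))" using half_iff assms by blast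
  also have "\<dots> \<longleftrightarrow> y \<in> (\<Inter>H\<in>A. half H (sv H x))" by simp
  finally show "y \<in> OC A x \<longleftrightarrow> y \<in> (\<Inter>H\<in>A. half H (sv H x))" .
qed

lemma OC_open:
  assumes "arrangement A" "\<forall>H\<in>A. sv H x \<noteq> Zero"
  shows "open (OC A x)"
proof -
  have "finite A" using assms(1) by (simp add: arrangement_def)
  moreover have "open (half H s)" for H s
    by (simp add: half_def open_halfspace_gt open_halfspace_lt)
  ultimately show ?thesis unfolding OC_Inter[OF assms(2)]
    by (intro open_INT) auto
qed

lemma OC_convex:
  assumes "\<forall>H\<in>A. sv H x \<noteq> Zero"
  shows "convex (OC A x)"
proof -
  have "convex (half H s)" for H s
    by (simp add: half_def convex_halfspace_gt convex_halfspace_lt)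
  then show ?thesis unfolding OC_Inter[OF assms] by (intro convex_INT) auto
qed

lemma OC_mem: "x \<in> OC A x"
  unfolding OC_def by simp

lemma OC_sub_KK: "OC A x \<subseteq> KK A (\<lambda>H. sv H x)"
proof
  fix y assume "y \<in> OC A x"
  then have "KK A (\<lambda>H. sv H y) = KK A (\<lambda>H. sv H x)"
    by (intro KK_cong) (simp add: OC_def)
  then show "y \<in> KK A (\<lambda>H. sv H x)" using sv_mem[of y A] by simp
qed

lemma OC_sub_U:
  assumes "arrangement A" "\<forall>H\<in>A. sv H x \<noteq> Zero"
  shows "OC A x \<subseteq> - \<Union>A"
proof
  fix y assume "y \<in> OC A x"
  then have "\<forall>H\<in>A. sv H y \<noteq> Zero" using assms(2) by (simp add: OC_def)
  then show "y \<in> - \<Union>A" using memU[OF assms(1)] by blast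
qed

lemma component_OO:
  assumes "arrangement A" "x \<in> - \<Union>A"
  shows "connected_component_set (- \<Union>A) x = OC A x"
proof
  have tot: "\<forall>H\<in>A. sv H x \<noteq> Zero" using memU[OF assms(1)] assms(2) by blast
  show "OC A x \<subseteq> connected_component_set (- \<Union>A) x"
    by (rule connected_component_maximal[OF OC_mem convex_connected[OF OC_convex[OF tot]] OC_sub_U[OF assms(1) tot]])
next
  let ?C = "connected_component_set (- \<Union>A) x"
  show "?C \<subseteq> OC A x"
  proof
    fix y assume y: "y \<in> ?C"
    have xC: "x \<in> ?C" using assms(2) by (simp add: connected_component_refl)
    have CU: "?C \<subseteq> - \<Union>A" by (rule connected_component_subset)
    show "y \<in> OC A x" unfolding OC_def
    proof (intro CollectI ballI)
      fix H assume H: "H \<in> A"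
      have sub: "?C \<subseteq> {z. normal H \<bullet> z > 0} \<union> {z. normal H \<bullet> z < 0}"
      proof
        fix z assume "z \<in> ?C"
        then have "sv H z \<noteq> Zero" using CU memU[OF assms(1)] H by blast
        then show "z \<in> {z. normal H \<bullet> z > 0} \<union> {z. normal H \<bullet> z < 0}"
          by (auto simp: sv_def split: if_splits)
      qed
      have "{z. normal H \<bullet> z > 0} \<inter> ?C = {} \<or> {z. normal H \<bullet> z < 0} \<inter> ?C = {}"
        by (rule connectedD[OF connected_connected_component open_halfspace_gt open_halfspace_lt _ sub]) auto
      then show "sv H y = sv H x"
      proof
        assume e: "{z. normal H \<bullet> z > 0} \<inter> ?C = {}"
        have "\<not> normal H \<bullet> y > 0" "\<not> normal H \<bullet> x > 0" using e y xC by blast+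
        moreover have "normal H \<bullet> y < 0" "normal H \<bullet> x < 0" using sub y xC calculation by blast+
        ultimately show ?thesis by (simp add: sv_def)
      next
        assume e: "{z. normal H \<bullet> z < 0} \<inter> ?C = {}"
        have "\<not> normal H \<bullet> y < 0" "\<not> normal H \<bullet> x < 0" using e y xC by blast+
        moreover have "normal H \<bullet> y > 0" "normal H \<bullet> x > 0" using sub y xC calculation by blast+
        ultimately show ?thesis by (simp add: sv_def)
      qed
    qed
  qed
qed

lemma comb_pos:
  fixes a b c :: real
  assumes "0 < c" "c \<le> 1" "0 \<le> a" "0 < b"
  shows "0 < (1 - c) * a + c * b"
proof -
  have "0 \<le> (1 - c) * a" using assms by simp
  moreover have "0 < c * b" using assms by simp
  ultimately show ?thesis by linarith
qed

lemma closure_OO: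
  assumes "arrangement A" "\<forall>H\<in>A. sv H x \<noteq> Zero"
  shows "closure (OC A x) = KK A (\<lambda>H. sv H x)"
proof
  show "closure (OC A x) \<subseteq> KK A (\<lambda>H. sv H x)"
    by (rule closure_minimal[OF OC_sub_KK closed_KK])
next
  show "KK A (\<lambda>H. sv H x) \<subseteq> closure (OC A x)"
  proof
    fix y assume y: "y \<in> KK A (\<lambda>H. sv H x)"
    define f where "f n = y + (1 / real (Suc n)) *\<^sub>R (x - y)" for n
    have "f n \<in> OC A x" for n
      unfolding OC_def
    proof (intro CollectI ballI)
      fix H assume H: "H \<in> A"
      let ?c = "1 / real (Suc n)"
      have c: "0 < ?c" "?c \<le> 1" by auto
      have eq: "normal H \<bullet> f n = (1 - ?c) * (normal H \<bullet> y) + ?c * (normal H \<bullet> x)"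
        unfolding f_def by (simp add: inner_add_right inner_diff_right algebra_simps)
      have ycl: "y \<in> cl H (sv H x)" using y H by (simp add: KK_def)
      show "sv H (f n) = sv H x"
      proof (cases "sv H x")
        case Zero then show ?thesis using assms(2) H by blast
      next
        case Pos
        then have "0 \<le> normal H \<bullet> y" "0 < normal H \<bullet> x" using ycl by (auto simp: cl_def sv_def split: if_splits)
        then have "0 < normal H \<bullet> f n" unfolding eq by (intro comb_pos c)
        then show ?thesis using Pos by (simp add: sv_def)
      next
        case Neg
        then have "0 \<le> - (normal H \<bullet> y)" "0 < - (normal H \<bullet> x)" using ycl by (auto simp: cl_def sv_def split: if_splits)
        then have "0 < (1 - ?c) * (- (normal H \<bullet> y)) + ?c * (- (normal H \<bullet> x))" by (intro comb_pos c)
        then have "normal H \<bullet> f n < 0" unfolding eq by (simp add: algebra_simps)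
        then show ?thesis using Neg by (simp add: sv_def)
      qed
    qed
    moreover have "f \<longlonglongrightarrow> y"
    proof -
      have "(\<lambda>n. y + (1 / real (Suc n)) *\<^sub>R (x - y)) \<longlonglongrightarrow> y + 0 *\<^sub>R (x - y)"
        by (intro tendsto_intros LIMSEQ_Suc[OF lim_1_over_n])
      then show ?thesis unfolding f_def by simp
    qed
    ultimately show "y \<in> closure (OC A x)" unfolding closure_sequential by blast
  qed
qed

lemma regions_char:
  assumes "arrangement A"
  shows "regions A = {KK A (\<lambda>H. sv H x) | x. \<forall>H\<in>A. sv H x \<noteq> Zero}"
proof -
  have "regions A = (\<lambda>x. closure (connected_component_set (- \<Union>A) x)) ` (- \<Union>A)"
    unfolding regions_def components_def by (simp add: image_image)
  also have "\<dots> = (\<lambda>x. KK A (\<lambda>H. sv H x)) ` (- \<Union>A)"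
  proof (intro image_cong refl)
    fix x assume x: "x \<in> - \<Union>A"
    then have tot: "\<forall>H\<in>A. sv H x \<noteq> Zero" using memU[OF assms] by blast
    show "closure (connected_component_set (- \<Union>A) x) = KK A (\<lambda>H. sv H x)"
      by (simp add: component_OO[OF assms x] closure_OO[OF assms tot])
  qed
  also have "\<dots> = {KK A (\<lambda>H. sv H x) | x. \<forall>H\<in>A. sv H x \<noteq> Zero}"
    using memU[OF assms] by blast
  finally show ?thesis .
qed

lemma ev_sign:
  assumes "normal H \<bullet> x \<noteq> 0"
  shows "eventually (\<lambda>e. sv H (x + e *\<^sub>R v) = sv H x) (at_right (0::real))"
proof -
  have lim: "((\<lambda>e. normal H \<bullet> (x + e *\<^sub>R v)) \<longlongrightarrow> normal H \<bullet> x) (at_right (0::real))"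
  proof -
    have "((\<lambda>e. normal H \<bullet> x + e * (normal H \<bullet> v)) \<longlongrightarrow> normal H \<bullet> x + 0 * (normal H \<bullet> v)) (at_right (0::real))"
      by (intro tendsto_intros)
    then show ?thesis by (simp add: inner_add_right)
  qed
  show ?thesis
  proof (cases "normal H \<bullet> x > 0")
    case True
    have "eventually (\<lambda>e. 0 < normal H \<bullet> (x + e *\<^sub>R v)) (at_right (0::real))"
      by (rule order_tendstoD(1)[OF lim True])
    then show ?thesis by eventually_elim (use True in \<open>simp add: sv_def\<close>)
  next
    case False
    then have neg: "normal H \<bullet> x < 0" using assms by linarith
    have "eventually (\<lambda>e. normal H \<bullet> (x + e *\<^sub>R v) < 0) (at_right (0::real))"
      by (rule order_tendstoD(2)[OF lim neg])
    then show ?thesis by eventually_elim (use neg in \<open>simp add: sv_def\<close>)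
  qed
qed

lemma faces_char:
  assumes arr: "arrangement A" and F: "F \<in> faces A"
  shows "\<exists>x. F = KK A (\<lambda>H. sv H x)"
proof -
  have fin: "finite A" using arr by (simp add: arrangement_def)
  obtain R where R: "R \<in> regions A" "F face_of R" and Fne: "F \<noteq> {}"
    using F unfolding faces_def by blast
  obtain x0 where x0: "\<forall>H\<in>A. sv H x0 \<noteq> Zero" and Req: "R = KK A (\<lambda>H. sv H x0)"
    using R(1) regions_char[OF arr] by blast
  have "convex F" using R(2) by (rule face_of_imp_convex)
  then have "rel_interior F \<noteq> {}" using Fne by (simp add: rel_interior_eq_empty)
  then obtain x where xr: "x \<in> rel_interior F" by blast
  then have xF: "x \<in> F" using rel_interior_subset by blast
  have FR: "F \<subseteq> R" using R(2) by (rule face_of_imp_subset)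
  have xR: "x \<in> R" using xF FR by blast
  have le: "sv H x = Zero \<or> sv H x = sv H x0" if "H \<in> A" for H
    using sv_cl[of x H "sv H x0"] KK_sub_cl[OF that, of "\<lambda>H. sv H x0"] xR Req by blast
  show ?thesis
  proof (intro exI equalityI)
    show "F \<subseteq> KK A (\<lambda>H. sv H x)"
    proof
      fix y assume yF: "y \<in> F"
      show "y \<in> KK A (\<lambda>H. sv H x)" unfolding KK_def
      proof (intro CollectI ballI)
        fix H assume H: "H \<in> A"
        show "y \<in> cl H (sv H x)"
        proof (cases "sv H x = Zero")
          case True
          have G: "R \<inter> {y. normal H \<bullet> y = 0} face_of R"
            unfolding Req by (rule KK_hyp_face[OF H])
          have "x \<in> R \<inter> {y. normal H \<bullet> y = 0}" using xR True by (simp add: sv_def split: if_splits)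
          then have "F \<subseteq> R \<inter> {y. normal H \<bullet> y = 0}"
            using subset_of_face_of[OF G FR] xr by blast
          then show ?thesis using yF True by (auto simp: cl_def)
        next
          case False
          then have "sv H x = sv H x0" using le H by blast
          moreover have "y \<in> cl H (sv H x0)" using yF FR KK_sub_cl[OF H, of "\<lambda>H. sv H x0"] Req by blast
          ultimately show ?thesis by simp
        qed
      qed
    qed
  next
    show "KK A (\<lambda>H. sv H x) \<subseteq> F"
    proof
      fix y assume y: "y \<in> KK A (\<lambda>H. sv H x)"
      have "\<forall>H\<in>A. eventually (\<lambda>e. sv H x = Zero \<or> sv H (x + e *\<^sub>R (x - y)) = sv H x) (at_right (0::real))"
      proof
        fix H assume "H \<in> A"
        show "eventually (\<lambda>e. sv H x = Zero \<or> sv H (x + e *\<^sub>R (x - y)) = sv H x) (at_right (0::real))"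
        proof (cases "sv H x = Zero")
          case True then show ?thesis by simp
        next
          case False
          then have "normal H \<bullet> x \<noteq> 0" by (auto simp: sv_def)
          from ev_sign[OF this, of "x - y"] show ?thesis by eventually_elim simp
        qed
      qed
      then have "eventually (\<lambda>e. \<forall>H\<in>A. sv H x = Zero \<or> sv H (x + e *\<^sub>R (x - y)) = sv H x) (at_right (0::real))"
        by (rule eventually_ball_finite[OF fin])
      moreover have "eventually (\<lambda>e. 0 < e) (at_right (0::real))" by (rule eventually_at_right_less)
      ultimately have "eventually (\<lambda>e. 0 < e \<and> (\<forall>H\<in>A. sv H x = Zero \<or> sv H (x + e *\<^sub>R (x - y)) = sv H x)) (at_right (0::real))"
        by eventually_elim blast
      then obtain e where e: "0 < e" and eH: "\<forall>H\<in>A. sv H x = Zero \<or> sv H (x + e *\<^sub>R (x - y)) = sv H x"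
        using eventually_happens[of _ "at_right (0::real)"] by force
      define z where "z = x + e *\<^sub>R (x - y)"
      have zK: "z \<in> KK A (\<lambda>H. sv H x)" unfolding KK_def
      proof (intro CollectI ballI)
        fix H assume H: "H \<in> A"
        show "z \<in> cl H (sv H x)"
        proof (cases "sv H x = Zero")
          case True
          then have "normal H \<bullet> x = 0" by (simp add: sv_def split: if_splits)
          moreover have "normal H \<bullet> y = 0"
          proof -
            have "y \<in> cl H (sv H x)" using y H by (simp add: KK_def)
            then show ?thesis using True by (simp add: cl_def)
          qed
          ultimately show ?thesis using True by (simp add: z_def cl_def inner_add_right inner_diff_right)
        next
          case False
          then have "sv H z = sv H x" using eH H unfolding z_def by blast
          moreover have "z \<in> cl H (sv H z)" using KK_sub_cl[OF H, of "\<lambda>H. sv H z"] sv_mem[of z A] by blast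
          ultimately show ?thesis by simp
        qed
      qed
      have KR: "KK A (\<lambda>H. sv H x) \<subseteq> R" unfolding Req by (rule KK_mono[OF le])
      show "y \<in> F"
      proof (cases "y = x")
        case True then show ?thesis using xF by simp
      next
        case False
        define u where "u = e / (1 + e)"
        have u: "0 < u" "u < 1" using e by (auto simp: u_def)
        have "z \<noteq> y"
        proof
          assume "z = y"
          then have "(1 + e) *\<^sub>R (x - y) = 0" by (simp add: z_def algebra_simps)
          then show False using e False by simp
        qed
        moreover have "x = (1 - u) *\<^sub>R z + u *\<^sub>R y"
        proof -
          have h1: "(1 + e) * (1 - u) = 1" and h2: "(1 + e) * u = e" using e by (simp_all add: u_def field_simps)
          have "(1 + e) *\<^sub>R ((1 - u) *\<^sub>R z + u *\<^sub>R y) = ((1 + e) * (1 - u)) *\<^sub>R z + ((1 + e) * u) *\<^sub>R y"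
            by (simp only: scaleR_add_right scaleR_scaleR)
          also have "\<dots> = z + e *\<^sub>R y" by (simp only: h1 h2 scaleR_one)
          also have "\<dots> = (1 + e) *\<^sub>R x" by (simp add: z_def algebra_simps)
          finally have "(1 + e) *\<^sub>R ((1 - u) *\<^sub>R z + u *\<^sub>R y) = (1 + e) *\<^sub>R x" .
          then show ?thesis using e by simp
        qed
        ultimately have "x \<in> open_segment z y" using u by (auto simp: in_segment)
        moreover have "z \<in> R" "y \<in> R" using zK y KR by blast+
        ultimately show ?thesis using face_ofD[OF R(2) _ _ _ xF] by blast
      qed
    qed
  qed
qed

lemma region_in_faces:
  assumes arr: "arrangement A" and "\<forall>H\<in>A. sv H x \<noteq> Zero"
  shows "KK A (\<lambda>H. sv H x) \<in> regions A" "KK A (\<lambda>H. sv H x) \<in> faces A"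
proof -
  have "KK A (\<lambda>H. sv H x) \<in> {KK A (\<lambda>H. sv H x) | x. \<forall>H\<in>A. sv H x \<noteq> Zero}" using assms(2) by blast
  then show r: "KK A (\<lambda>H. sv H x) \<in> regions A" unfolding regions_char[OF arr] .
  have "KK A (\<lambda>H. sv H x) face_of KK A (\<lambda>H. sv H x)" by (rule face_of_refl[OF convex_KK])
  moreover have "KK A (\<lambda>H. sv H x) \<noteq> {}" using sv_mem by blast
  ultimately show "KK A (\<lambda>H. sv H x) \<in> faces A" using r unfolding faces_def by blast
qed

lemma regions_sub_faces:
  assumes arr: "arrangement A" and R: "R \<in> regions A"
  shows "R \<in> faces A"
proof -
  obtain x where "\<forall>H\<in>A. sv H x \<noteq> Zero" "R = KK A (\<lambda>H. sv H x)"
    using R unfolding regions_char[OF arr] by blast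
  then show ?thesis using region_in_faces[OF arr] by simp
qed

lemma face_sigma:
  assumes arr: "arrangement A" and F: "F \<in> faces A"
  obtains x where "F = KK A (\<lambda>H. sv H x)" "\<And>H. H \<in> A \<Longrightarrow> sigma H F = sv H x"
proof -
  obtain x where "F = KK A (\<lambda>H. sv H x)" using faces_char[OF arr F] by blast
  moreover have "\<And>H. H \<in> A \<Longrightarrow> sigma H (KK A (\<lambda>H. sv H x)) = sv H x" by (rule sigma_KK[OF arr])
  ultimately show ?thesis using that by simp
qed

lemma face_eq:
  assumes arr: "arrangement A" and F: "F \<in> faces A" and G: "G \<in> faces A"
    and eq: "\<And>H. H \<in> A \<Longrightarrow> sigma H F = sigma H G"
  shows "F = G"
proof -
  obtain x where x: "F = KK A (\<lambda>H. sv H x)" "\<And>H. H \<in> A \<Longrightarrow> sigma H F = sv H x"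
    using face_sigma[OF arr F] by blast
  obtain y where y: "G = KK A (\<lambda>H. sv H y)" "\<And>H. H \<in> A \<Longrightarrow> sigma H G = sv H y"
    using face_sigma[OF arr G] by blast
  have "KK A (\<lambda>H. sv H x) = KK A (\<lambda>H. sv H y)"
    by (rule KK_cong) (metis x(2) y(2) eq)
  then show ?thesis using x(1) y(1) by simp
qed

lemma face_cl:
  assumes arr: "arrangement A" and F: "F \<in> faces A" and H: "H \<in> A"
  shows "F \<subseteq> cl H (sigma H F)"
proof -
  obtain x where x: "F = KK A (\<lambda>H. sv H x)" "\<And>H. H \<in> A \<Longrightarrow> sigma H F = sv H x"
    using face_sigma[OF arr F] by blast
  show ?thesis using KK_sub_cl[OF H, of "\<lambda>H. sv H x"] x(1) x(2)[OF H] by simp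
qed

lemma region_total:
  assumes arr: "arrangement A" and R: "R \<in> regions A" and H: "H \<in> A"
  shows "sigma H R \<noteq> Zero"
proof -
  obtain x where "\<forall>H\<in>A. sv H x \<noteq> Zero" "R = KK A (\<lambda>H. sv H x)"
    using R unfolding regions_char[OF arr] by blast
  then show ?thesis using sigma_KK[OF arr H, of x] H by simp
qed

lemma total_region:
  assumes arr: "arrangement A" and F: "F \<in> faces A" and tot: "\<And>H. H \<in> A \<Longrightarrow> sigma H F \<noteq> Zero"
  shows "F \<in> regions A"
proof -
  obtain x where x: "F = KK A (\<lambda>H. sv H x)" "\<And>H. H \<in> A \<Longrightarrow> sigma H F = sv H x"
    using face_sigma[OF arr F] by blast
  have "\<forall>H\<in>A. sv H x \<noteq> Zero" using x(2) tot by metis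
  then show ?thesis using x(1) region_in_faces[OF arr] by simp
qed

lemma sub_le:
  assumes arr: "arrangement A" and F: "F \<in> faces A" and G: "G \<in> faces A" and FG: "F \<subseteq> G"
    and H: "H \<in> A"
  shows "sigma H F = Zero \<or> sigma H F = sigma H G"
proof -
  obtain x where x: "F = KK A (\<lambda>H. sv H x)" "\<And>H. H \<in> A \<Longrightarrow> sigma H F = sv H x"
    using face_sigma[OF arr F] by blast
  have "x \<in> G" using FG x(1) sv_mem by blast
  then have "x \<in> cl H (sigma H G)" using face_cl[OF arr G H] by blast
  then show ?thesis using sv_cl[of x H "sigma H G"] x(2)[OF H] by metis
qed

lemma le_face:
  assumes arr: "arrangement A" and F: "F \<in> faces A" and G: "G \<in> faces A"
    and le: "\<And>H. H \<in> A \<Longrightarrow> sigma H F = Zero \<or> sigma H F = sigma H G"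
  shows "F face_of G"
proof -
  obtain x where x: "F = KK A (\<lambda>H. sv H x)" "\<And>H. H \<in> A \<Longrightarrow> sigma H F = sv H x"
    using face_sigma[OF arr F] by blast
  obtain y where y: "G = KK A (\<lambda>H. sv H y)" "\<And>H. H \<in> A \<Longrightarrow> sigma H G = sv H y"
    using face_sigma[OF arr G] by blast
  have "\<And>H. H \<in> A \<Longrightarrow> sv H x = Zero \<or> sv H x = sv H y" using le x(2) y(2) by metis
  then have "KK A (\<lambda>H. sv H x) face_of KK A (\<lambda>H. sv H y)" by (rule KK_face)
  then show ?thesis using x(1) y(1) by simp
qed

lemma tits_region:
  assumes arr: "arrangement A" and F: "F \<in> faces A" and R: "R \<in> regions A"
  shows "tits A F R \<in> regions A"
    "\<And>H. H \<in> A \<Longrightarrow> sigma H (tits A F R) = (if sigma H F \<noteq> Zero then sigma H F else sigma H R)"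
proof -
  have fin: "finite A" using arr by (simp add: arrangement_def)
  obtain x where x: "F = KK A (\<lambda>H. sv H x)" "\<And>H. H \<in> A \<Longrightarrow> sigma H F = sv H x"
    using face_sigma[OF arr F] by blast
  obtain y where y: "\<forall>H\<in>A. sv H y \<noteq> Zero" "R = KK A (\<lambda>H. sv H y)"
    using R unfolding regions_char[OF arr] by blast
  have sR: "\<And>H. H \<in> A \<Longrightarrow> sigma H R = sv H y" using y(2) sigma_KK[OF arr] by simp
  let ?u = "\<lambda>H. if sv H x \<noteq> Zero then sv H x else sv H y"
  have "\<forall>H\<in>A. eventually (\<lambda>e. 0 < e \<longrightarrow> sv H (x + e *\<^sub>R y) = ?u H) (at_right (0::real))"
  proof
    fix H assume "H \<in> A"
    show "eventually (\<lambda>e. 0 < e \<longrightarrow> sv H (x + e *\<^sub>R y) = ?u H) (at_right (0::real))"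
    proof (cases "sv H x = Zero")
      case True
      then have nx: "normal H \<bullet> x = 0" by (auto simp: sv_def split: if_splits)
      have "0 < e \<Longrightarrow> sv H (x + e *\<^sub>R y) = sv H y" for e :: real
        using nx by (auto simp: sv_def inner_add_right zero_less_mult_iff mult_less_0_iff)
      then show ?thesis using True by simp
    next
      case False
      then have "normal H \<bullet> x \<noteq> 0" by (auto simp: sv_def)
      from ev_sign[OF this, of y] show ?thesis by eventually_elim (use False in simp)
    qed
  qed
  then have "eventually (\<lambda>e. \<forall>H\<in>A. 0 < e \<longrightarrow> sv H (x + e *\<^sub>R y) = ?u H) (at_right (0::real))"
    by (rule eventually_ball_finite[OF fin])
  moreover have "eventually (\<lambda>e. 0 < e) (at_right (0::real))" by (rule eventually_at_right_less)
  ultimately have "eventually (\<lambda>e. 0 < e \<and> (\<forall>H\<in>A. 0 < e \<longrightarrow> sv H (x + e *\<^sub>R y) = ?u H)) (at_right (0::real))"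
    by eventually_elim blast
  then obtain e where e: "0 < e" and eH: "\<forall>H\<in>A. 0 < e \<longrightarrow> sv H (x + e *\<^sub>R y) = ?u H"
    using eventually_happens[of _ "at_right (0::real)"] by force
  define z where "z = x + e *\<^sub>R y"
  have zu: "\<And>H. H \<in> A \<Longrightarrow> sv H z = ?u H" using eH e unfolding z_def by blast
  have ztot: "\<forall>H\<in>A. sv H z \<noteq> Zero" using zu y(1) by simp
  have Kr: "KK A (\<lambda>H. sv H z) \<in> regions A" "KK A (\<lambda>H. sv H z) \<in> faces A"
    using region_in_faces[OF arr ztot] by blast+
  have Ks: "\<And>H. H \<in> A \<Longrightarrow> sigma H (KK A (\<lambda>H. sv H z)) = (if sigma H F \<noteq> Zero then sigma H F else sigma H R)"
    using sigma_KK[OF arr] zu x(2) sR by simp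
  have "tits A F R = KK A (\<lambda>H. sv H z)"
    unfolding tits_def
  proof (rule the_equality)
    show "KK A (\<lambda>H. sv H z) \<in> faces A \<and> (\<forall>H\<in>A. sigma H (KK A (\<lambda>H. sv H z)) = (if sigma H F \<noteq> Zero then sigma H F else sigma H R))"
      using Kr Ks by blast
  next
    fix K assume K: "K \<in> faces A \<and> (\<forall>H\<in>A. sigma H K = (if sigma H F \<noteq> Zero then sigma H F else sigma H R))"
    show "K = KK A (\<lambda>H. sv H z)"
      by (rule face_eq[OF arr _ Kr(2)]) (use K Ks in auto)
  qed
  then show "tits A F R \<in> regions A"
    "\<And>H. H \<in> A \<Longrightarrow> sigma H (tits A F R) = (if sigma H F \<noteq> Zero then sigma H F else sigma H R)"
    using Kr Ks by simp_all
qed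

lemma cl_flip: "(- y \<in> cl H s) \<longleftrightarrow> (y \<in> cl H (flip s))"
  by (cases s) (auto simp: cl_def inner_minus_right)

lemma opp_region:
  assumes arr: "arrangement A" and B: "B \<in> regions A"
  shows "opp B \<in> regions A" "\<And>H. H \<in> A \<Longrightarrow> sigma H (opp B) = flip (sigma H B)"
proof -
  obtain x where x: "\<forall>H\<in>A. sv H x \<noteq> Zero" "B = KK A (\<lambda>H. sv H x)"
    using B unfolding regions_char[OF arr] by blast
  have eq: "opp B = KK A (\<lambda>H. sv H (- x))"
  proof (rule set_eqI)
    fix y
    have "y \<in> opp B \<longleftrightarrow> - y \<in> B"
    proof
      assume "y \<in> opp B"
      then obtain z where "z \<in> B" "y = - z" unfolding opp_def by blast
      then show "- y \<in> B" by simp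
    next
      assume "- y \<in> B"
      then have "- (- y) \<in> uminus ` B" by (rule imageI)
      then show "y \<in> opp B" unfolding opp_def by simp
    qed
    also have "\<dots> \<longleftrightarrow> y \<in> KK A (\<lambda>H. sv H (- x))"
      unfolding x(2) KK_def by (simp add: cl_flip flip_sv)
    finally show "y \<in> opp B \<longleftrightarrow> y \<in> KK A (\<lambda>H. sv H (- x))" .
  qed
  have fz: "flip s = Zero \<longleftrightarrow> s = Zero" for s by (cases s) auto
  have tot: "\<forall>H\<in>A. sv H (- x) \<noteq> Zero" using x(1) by (simp add: flip_sv fz)
  show "opp B \<in> regions A" unfolding eq by (rule region_in_faces[OF arr tot])
  show "sigma H (opp B) = flip (sigma H B)" if H: "H \<in> A" for H
  proof -
    have a: "sigma H (KK A (\<lambda>H. sv H (- x))) = sv H (- x)" by (rule sigma_KK[OF arr H])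
    have b: "sigma H (KK A (\<lambda>H. sv H x)) = sv H x" by (rule sigma_KK[OF arr H])
    show ?thesis unfolding eq a unfolding x(2) b by (rule flip_sv)
  qed
qed

lemma region_aff_dim:
  fixes A :: "'a::euclidean_space set set"
  assumes arr: "arrangement A" and R: "R \<in> regions A"
  shows "aff_dim R = DIM('a)"
proof -
  obtain x :: 'a where x: "\<forall>H\<in>A. sv H x \<noteq> Zero" "R = KK A (\<lambda>H. sv H x)"
    using R unfolding regions_char[OF arr] by blast
  have "OC A x \<subseteq> interior R" unfolding x(2)
    by (rule interior_maximal[OF OC_sub_KK OC_open[OF arr x(1)]])
  then have "interior R \<noteq> {}" using OC_mem by blast
  then show ?thesis by (rule aff_dim_nonempty_interior)
qed

lemma nonregion_aff_dim:
  fixes A :: "'a::euclidean_space set set"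
  assumes arr: "arrangement A" and F: "F \<in> faces A" and H: "H \<in> A" and z: "sigma H F = Zero"
  shows "aff_dim F < DIM('a)"
proof -
  have "F \<subseteq> {y. normal H \<bullet> y = 0}" using face_cl[OF arr F H] z by (simp add: cl_def)
  then have "aff_dim F \<le> aff_dim {y::'a. normal H \<bullet> y = 0}" by (rule aff_dim_subset)
  also have "\<dots> = int DIM('a) - 1"
  proof -
    have nz: "normal H \<noteq> 0" using nH[OF arr H] by blast
    show ?thesis using aff_dim_hyperplane[OF nz, of 0] DIM_positive[where 'a='a] by (simp add: of_nat_diff)
  qed
  finally show ?thesis by simp
qed

lemma seg1:
  fixes a b t :: real
  assumes "a > 0" "b < 0" "0 \<le> t" "t \<le> a / (a - b)"
  shows "a + t * (b - a) \<ge> 0"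
proof -
  have "a - b > 0" using assms by simp
  then have "t * (a - b) \<le> a" using assms(4) by (simp add: le_divide_eq)
  then show ?thesis by (simp add: algebra_simps)
qed

lemma seg2:
  fixes a b :: real
  assumes "a \<noteq> b"
  shows "a + (a / (a - b)) * (b - a) = 0"
proof -
  have "a - b \<noteq> 0" using assms by simp
  then show ?thesis by (simp add: field_simps)
qed

lemma seg3:
  fixes a b :: real
  assumes "(a > 0 \<and> b < 0) \<or> (a < 0 \<and> b > 0)"
  shows "0 < a / (a - b) \<and> a / (a - b) < 1"
  using assms by (auto simp: divide_simps)

lemma comb_sign:
  fixes a b t :: real
  assumes "0 < t" "t < 1"
  shows "a > 0 \<Longrightarrow> b > 0 \<Longrightarrow> (1 - t) * a + t * b > 0"
    and "a < 0 \<Longrightarrow> b < 0 \<Longrightarrow> (1 - t) * a + t * b < 0"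
proof -
  have p: "0 < 1 - t" using assms by simp
  show "a > 0 \<Longrightarrow> b > 0 \<Longrightarrow> (1 - t) * a + t * b > 0"
    using mult_pos_pos[OF p, of a] mult_pos_pos[OF assms(1), of b] by linarith
  show "a < 0 \<Longrightarrow> b < 0 \<Longrightarrow> (1 - t) * a + t * b < 0"
    using mult_pos_neg[OF p, of a] mult_pos_neg[OF assms(1), of b] by linarith
qed

lemma wall:
  assumes arr: "arrangement A" and C: "C \<in> regions A" and D: "D \<in> regions A" and CD: "C \<noteq> D"
  shows "\<exists>G\<in>faces A. G face_of C \<and> (\<exists>H\<in>A. sigma H G = Zero) \<and>
           (\<forall>H\<in>A. sigma H G = Zero \<longrightarrow> sigma H C \<noteq> sigma H D)"
proof -
  have fin: "finite A" using arr by (simp add: arrangement_def)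
  obtain c where c: "\<forall>H\<in>A. sv H c \<noteq> Zero" "C = KK A (\<lambda>H. sv H c)"
    using C unfolding regions_char[OF arr] by blast
  obtain d where d: "\<forall>H\<in>A. sv H d \<noteq> Zero" "D = KK A (\<lambda>H. sv H d)"
    using D unfolding regions_char[OF arr] by blast
  have sC: "\<And>H. H \<in> A \<Longrightarrow> sigma H C = sv H c" using c(2) sigma_KK[OF arr] by simp
  have sD: "\<And>H. H \<in> A \<Longrightarrow> sigma H D = sv H d" using d(2) sigma_KK[OF arr] by simp
  define X where "X = {H\<in>A. sv H c \<noteq> sv H d}"
  have "X \<noteq> {}"
  proof
    assume "X = {}"
    then have "\<And>H. H \<in> A \<Longrightarrow> sv H c = sv H d" unfolding X_def by blast
    then have "C = D" unfolding c(2) d(2) by (rule KK_cong)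
    then show False using CD by simp
  qed
  have finX: "finite X" using fin unfolding X_def by simp
  define a where "a H = normal H \<bullet> c" for H
  define b where "b H = normal H \<bullet> d" for H
  define t where "t H = a H / (a H - b H)" for H
  have opp: "(a H > 0 \<and> b H < 0) \<or> (a H < 0 \<and> b H > 0)" if "H \<in> X" for H
  proof -
    have "sv H c \<noteq> Zero" "sv H d \<noteq> Zero" "sv H c \<noteq> sv H d" using that c(1) d(1) unfolding X_def by auto
    then show ?thesis unfolding a_def b_def sv_def by (auto split: if_splits)
  qed
  have same: "(a H > 0 \<and> b H > 0) \<or> (a H < 0 \<and> b H < 0)" if "H \<in> A" "H \<notin> X" for H
  proof -
    have "sv H c \<noteq> Zero" "sv H d \<noteq> Zero" "sv H c = sv H d" using that c(1) d(1) unfolding X_def by auto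
    then show ?thesis unfolding a_def b_def sv_def by (auto split: if_splits)
  qed
  define t0 where "t0 = Min (t ` X)"
  have "t0 \<in> t ` X" unfolding t0_def using finX \<open>X \<noteq> {}\<close> by (intro Min_in) auto
  then obtain H0 where H0: "H0 \<in> X" "t H0 = t0" by blast
  have t0le: "t0 \<le> t H" if "H \<in> X" for H unfolding t0_def using finX that by (intro Min_le) auto
  have t01: "0 < t0" "t0 < 1" using seg3[OF opp[OF H0(1)]] H0(2) unfolding t_def by auto
  define p where "p = (1 - t0) *\<^sub>R c + t0 *\<^sub>R d"
  have np: "normal H \<bullet> p = a H + t0 * (b H - a H)" for H
    unfolding p_def a_def b_def by (simp add: inner_add_right algebra_simps)
  have le: "sv H p = Zero \<or> sv H p = sv H c" if "H \<in> A" for H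
  proof (cases "H \<in> X")
    case True
    have "t0 \<le> a H / (a H - b H)" using t0le[OF True] unfolding t_def .
    show ?thesis
    proof (cases "a H > 0")
      case pos: True
      then have "b H < 0" using opp[OF True] by auto
      then have "a H + t0 * (b H - a H) \<ge> 0" using seg1[OF pos _ _ \<open>t0 \<le> _\<close>] t01 by simp
      then show ?thesis using pos unfolding sv_def np a_def by auto
    next
      case False
      then have an: "- a H > 0" "- b H < 0" using opp[OF True] by auto
      have ne: "a H - b H \<noteq> 0" using an by auto
      have "(- a H) / ((- a H) - (- b H)) = a H / (a H - b H)" using ne by (simp add: field_simps)
      then have "t0 \<le> (- a H) / ((- a H) - (- b H))" using \<open>t0 \<le> a H / (a H - b H)\<close> by simp
      from seg1[OF an _ this] t01 have "- a H + t0 * (- b H - - a H) \<ge> 0" by simp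
      then have "a H + t0 * (b H - a H) \<le> 0" by (simp add: algebra_simps)
      then show ?thesis using an unfolding sv_def np a_def by auto
    qed
  next
    case False
    have "(1 - t0) * a H + t0 * b H = a H + t0 * (b H - a H)" by (simp add: algebra_simps)
    moreover have "(a H > 0 \<and> (1 - t0) * a H + t0 * b H > 0) \<or> (a H < 0 \<and> (1 - t0) * a H + t0 * b H < 0)"
    proof (cases "a H > 0")
      case True
      then have "b H > 0" using same[OF that \<open>H \<notin> X\<close>] by auto
      then show ?thesis using True comb_sign(1)[OF t01 True] by simp
    next
      case False
      then have "a H < 0" "b H < 0" using same[OF that \<open>H \<notin> X\<close>] by auto
      then show ?thesis using comb_sign(2)[OF t01] by simp
    qed
    ultimately show ?thesis unfolding sv_def np a_def by auto
  qed
  have zX: "H \<in> X" if "H \<in> A" "sv H p = Zero" for H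
  proof (rule ccontr)
    assume "H \<notin> X"
    have "(1 - t0) * a H + t0 * b H = a H + t0 * (b H - a H)" by (simp add: algebra_simps)
    moreover have "(1 - t0) * a H + t0 * b H \<noteq> 0"
    proof (cases "a H > 0")
      case True
      then have "b H > 0" using same[OF that(1) \<open>H \<notin> X\<close>] by auto
      from comb_sign(1)[OF t01 True this] show ?thesis by simp
    next
      case False
      then have "a H < 0" "b H < 0" using same[OF that(1) \<open>H \<notin> X\<close>] by auto
      from comb_sign(2)[OF t01 this] show ?thesis by simp
    qed
    ultimately show False using that(2) unfolding sv_def np by (auto split: if_splits)
  qed
  have z0: "sv H0 p = Zero"
  proof -
    have "a H0 \<noteq> b H0" using opp[OF H0(1)] by auto
    then have e0: "a H0 + (a H0 / (a H0 - b H0)) * (b H0 - a H0) = 0" by (rule seg2)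
    have "t0 = a H0 / (a H0 - b H0)" using H0(2) unfolding t_def by simp
    then have "a H0 + t0 * (b H0 - a H0) = 0" using e0 by simp
    then show ?thesis unfolding sv_def np by simp
  qed
  define G where "G = KK A (\<lambda>H. sv H p)"
  have sG: "\<And>H. H \<in> A \<Longrightarrow> sigma H G = sv H p" unfolding G_def by (rule sigma_KK[OF arr])
  have GC: "G face_of C" unfolding G_def c(2) by (rule KK_face[OF le])
  have "G \<noteq> {}" unfolding G_def using sv_mem by blast
  then have Gf: "G \<in> faces A" using GC C unfolding faces_def by blast
  have H0A: "H0 \<in> A" using H0(1) unfolding X_def by blast
  have ex: "\<exists>H\<in>A. sigma H G = Zero" using H0A z0 sG[OF H0A] by auto
  have al: "\<forall>H\<in>A. sigma H G = Zero \<longrightarrow> sigma H C \<noteq> sigma H D"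
  proof (intro ballI impI)
    fix H assume "H \<in> A" "sigma H G = Zero"
    then have "H \<in> X" using zX sG by simp
    then show "sigma H C \<noteq> sigma H D" using sC sD unfolding X_def by simp
  qed
  show ?thesis using Gf GC ex al by blast
qed

lemma sgn3: "a \<noteq> Zero \<Longrightarrow> b \<noteq> Zero \<Longrightarrow> c \<noteq> Zero \<Longrightarrow> a \<noteq> b \<Longrightarrow> a \<noteq> c \<Longrightarrow> b = c"
  by (cases a; cases b; cases c) auto

lemma sgn_flip: "a \<noteq> Zero \<Longrightarrow> b \<noteq> Zero \<Longrightarrow> b \<noteq> a \<Longrightarrow> b = flip a"
  by (cases a; cases b) auto

lemma flip_ne: "a \<noteq> Zero \<Longrightarrow> flip a \<noteq> a"
  by (cases a) auto

lemma max_elem: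
  assumes arr: "arrangement A" and sub: "\<Delta> \<subseteq> faces A" and F: "F \<in> \<Delta>"
  shows "\<exists>M\<in>\<Delta>. F \<subseteq> M \<and> (\<forall>K\<in>\<Delta>. M \<subseteq> K \<longrightarrow> K = M)"
proof -
  have fin: "finite A" using arr by (simp add: arrangement_def)
  define f where "f M = card {H\<in>A. sigma H M \<noteq> Zero}" for M
  have "\<exists>M. (M \<in> \<Delta> \<and> F \<subseteq> M) \<and> (\<forall>K. (K \<in> \<Delta> \<and> F \<subseteq> K) \<longrightarrow> f K \<le> f M)"
  proof (rule Lattices_Big.ex_has_greatest_nat[where b = "Suc (card A)"])
    show "F \<in> \<Delta> \<and> F \<subseteq> F" using F by simp
    show "\<forall>y. y \<in> \<Delta> \<and> F \<subseteq> y \<longrightarrow> f y < Suc (card A)"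
    proof (intro allI impI)
      fix y
      have "f y \<le> card A" unfolding f_def using fin by (intro card_mono) auto
      then show "f y < Suc (card A)" by simp
    qed
  qed
  then obtain M where M: "M \<in> \<Delta>" "F \<subseteq> M" and Mmax: "\<And>K. K \<in> \<Delta> \<Longrightarrow> F \<subseteq> K \<Longrightarrow> f K \<le> f M"
    by blast
  have "\<forall>K\<in>\<Delta>. M \<subseteq> K \<longrightarrow> K = M"
  proof (intro ballI impI)
    fix K assume K: "K \<in> \<Delta>" "M \<subseteq> K"
    have Mf: "M \<in> faces A" and Kf: "K \<in> faces A" using M K sub by blast+
    have le: "\<And>H. H \<in> A \<Longrightarrow> sigma H M = Zero \<or> sigma H M = sigma H K"
      by (rule sub_le[OF arr Mf Kf K(2)])
    have ss: "{H\<in>A. sigma H M \<noteq> Zero} \<subseteq> {H\<in>A. sigma H K \<noteq> Zero}" using le by force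
    have "f K \<le> f M" using K M(2) by (intro Mmax) auto
    moreover have f2: "finite {H\<in>A. sigma H K \<noteq> Zero}" using fin by simp
    moreover have "card {H\<in>A. sigma H M \<noteq> Zero} \<le> card {H\<in>A. sigma H K \<noteq> Zero}"
      by (rule card_mono[OF f2 ss])
    ultimately have "card {H\<in>A. sigma H M \<noteq> Zero} = card {H\<in>A. sigma H K \<noteq> Zero}"
      unfolding f_def by linarith
    then have eqs: "{H\<in>A. sigma H M \<noteq> Zero} = {H\<in>A. sigma H K \<noteq> Zero}"
      by (rule card_subset_eq[OF f2 ss])
    show "K = M"
    proof (rule face_eq[OF arr Kf Mf])
      fix H assume H: "H \<in> A"
      show "sigma H K = sigma H M"
      proof (cases "sigma H M = Zero")
        case True
        then have "H \<notin> {H\<in>A. sigma H M \<noteq> Zero}" by simp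
        then have "H \<notin> {H\<in>A. sigma H K \<noteq> Zero}" using eqs by simp
        then show ?thesis using True H by simp
      next
        case False then show ?thesis using le[OF H] by simp
      qed
    qed
  qed
  then show ?thesis using M by blast
qed

lemma region_max:
  assumes arr: "arrangement A" and sub: "\<Delta> \<subseteq> faces A" and R: "R \<in> regions A"
  shows "\<forall>K\<in>\<Delta>. R \<subseteq> K \<longrightarrow> K = R"
proof (intro ballI impI)
  fix K assume K: "K \<in> \<Delta>" "R \<subseteq> K"
  have Rf: "R \<in> faces A" by (rule regions_sub_faces[OF arr R])
  have Kf: "K \<in> faces A" using K sub by blast
  show "K = R"
  proof (rule face_eq[OF arr Kf Rf])
    fix H assume H: "H \<in> A"
    show "sigma H K = sigma H R"
      using sub_le[OF arr Rf Kf K(2) H] region_total[OF arr R H] by simp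
  qed
qed

theorem lemma3p4:
  fixes A :: "'a::euclidean_space set set" and B :: "'a set" and \<Delta> :: "'a set set"
  assumes "arrangement A"
    and "B \<in> regions A"
    and "subcomplex A \<Delta>"
    and "\<Delta> \<noteq> {}"
  shows "Des A B \<Delta> = \<Delta> \<longleftrightarrow>
    (pure \<Delta> \<and> \<Delta> \<inter> regions A \<noteq> {} \<and> upper_set A B (\<Delta> \<inter> regions A))"
proof -
  note arr = assms(1)
  have fin: "finite A" using arr by (simp add: arrangement_def)
  have sub: "\<Delta> \<subseteq> faces A" using assms(3) by (simp add: subcomplex_def)
  have clo: "\<And>F G. F \<in> \<Delta> \<Longrightarrow> G \<in> faces A \<Longrightarrow> G face_of F \<Longrightarrow> G \<in> \<Delta>"
    using assms(3) unfolding subcomplex_def by blast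
  have oB: "opp B \<in> regions A" and soB: "\<And>H. H \<in> A \<Longrightarrow> sigma H (opp B) = flip (sigma H B)"
    using opp_region[OF arr assms(2)] by blast+
  have Bt: "\<And>H. H \<in> A \<Longrightarrow> sigma H B \<noteq> Zero" by (rule region_total[OF arr assms(2)])
  define T where "T F = tits A F (opp B)" for F
  have Treg: "\<And>F. F \<in> faces A \<Longrightarrow> T F \<in> regions A"
    unfolding T_def using tits_region(1)[OF arr _ oB] .
  have Tsig: "\<And>F H. F \<in> faces A \<Longrightarrow> H \<in> A \<Longrightarrow>
      sigma H (T F) = (if sigma H F \<noteq> Zero then sigma H F else flip (sigma H B))"
    unfolding T_def using tits_region(2)[OF arr _ oB] soB by simp
  have Tface: "F face_of T F" if F: "F \<in> faces A" for F
  proof (rule le_face[OF arr F regions_sub_faces[OF arr Treg[OF F]]])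
    fix H assume H: "H \<in> A"
    show "sigma H F = Zero \<or> sigma H F = sigma H (T F)" using Tsig[OF F H] by simp
  qed
  have Des_iff: "Des A B \<Delta> = \<Delta> \<longleftrightarrow> (\<forall>F\<in>\<Delta>. T F \<in> \<Delta>)"
  proof
    assume eq: "Des A B \<Delta> = \<Delta>"
    show "\<forall>F\<in>\<Delta>. T F \<in> \<Delta>"
    proof
      fix F assume "F \<in> \<Delta>"
      then have "F \<in> Des A B \<Delta>" using eq by simp
      then show "T F \<in> \<Delta>" unfolding Des_def T_def by simp
    qed
  next
    assume cl: "\<forall>F\<in>\<Delta>. T F \<in> \<Delta>"
    show "Des A B \<Delta> = \<Delta>"
    proof
      show "Des A B \<Delta> \<subseteq> \<Delta>"
      proof
        fix F assume "F \<in> Des A B \<Delta>"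
        then have F: "F \<in> faces A" "T F \<in> \<Delta>" unfolding Des_def T_def by auto
        show "F \<in> \<Delta>" by (rule clo[OF F(2) F(1) Tface[OF F(1)]])
      qed
    next
      show "\<Delta> \<subseteq> Des A B \<Delta>"
      proof
        fix F assume F: "F \<in> \<Delta>"
        then have "F \<in> faces A" "T F \<in> \<Delta>" using sub cl by auto
        then show "F \<in> Des A B \<Delta>" unfolding Des_def T_def by simp
      qed
    qed
  qed
  show ?thesis unfolding Des_iff
  proof
    assume cl: "\<forall>F\<in>\<Delta>. T F \<in> \<Delta>"
    have maxreg: "M \<in> regions A" if M: "M \<in> \<Delta>" "\<forall>K\<in>\<Delta>. M \<subseteq> K \<longrightarrow> K = M" for M
    proof -
      have Mf: "M \<in> faces A" using M sub by blast
      have "M \<subseteq> T M" using face_of_imp_subset[OF Tface[OF Mf]] .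
      moreover have "T M \<in> \<Delta>" using cl M(1) by blast
      ultimately have "T M = M" using M(2) by blast
      then show ?thesis using Treg[OF Mf] by simp
    qed
    have ne: "\<Delta> \<inter> regions A \<noteq> {}"
    proof -
      obtain F where F: "F \<in> \<Delta>" using assms(4) by blast
      then have "T F \<in> \<Delta>" "T F \<in> regions A" using cl Treg sub by auto
      then show ?thesis by blast
    qed
    have pu: "pure \<Delta>"
      unfolding pure_def
    proof (intro ballI impI)
      fix F G assume "F \<in> \<Delta>" "G \<in> \<Delta>"
        and m: "(\<forall>K\<in>\<Delta>. F \<subseteq> K \<longrightarrow> K = F) \<and> (\<forall>K\<in>\<Delta>. G \<subseteq> K \<longrightarrow> K = G)"
      then have "F \<in> regions A" "G \<in> regions A" using maxreg by blast+
      then show "aff_dim F = aff_dim G" using region_aff_dim[OF arr] by simp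
    qed
    have up: "upper_set A B (\<Delta> \<inter> regions A)"
      unfolding upper_set_def
    proof (intro conjI ballI impI)
      show "\<Delta> \<inter> regions A \<subseteq> regions A" by blast
      fix C D assume C: "C \<in> \<Delta> \<inter> regions A" and D: "D \<in> regions A" and w: "weak_le A B C D"
      have "\<forall>C. C \<in> \<Delta> \<and> C \<in> regions A \<and> card (separating A C D) = n \<and> weak_le A B C D \<longrightarrow> D \<in> \<Delta>" for n
      proof (induction n rule: less_induct)
        case (less n)
        show ?case
        proof (intro allI impI)
          fix C assume asm: "C \<in> \<Delta> \<and> C \<in> regions A \<and> card (separating A C D) = n \<and> weak_le A B C D"
          then have CD: "C \<in> \<Delta>" "C \<in> regions A" "card (separating A C D) = n" "weak_le A B C D" by auto
          show "D \<in> \<Delta>"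
          proof (cases "C = D")
            case True then show ?thesis using CD by simp
          next
            case False
            obtain G where G: "G \<in> faces A" "G face_of C" and H0: "\<exists>H\<in>A. sigma H G = Zero"
              and sep: "\<forall>H\<in>A. sigma H G = Zero \<longrightarrow> sigma H C \<noteq> sigma H D"
              using wall[OF arr CD(2) D False] by blast
            have Cf: "C \<in> faces A" by (rule regions_sub_faces[OF arr CD(2)])
            have GD: "G \<in> \<Delta>" by (rule clo[OF CD(1) G(1) G(2)])
            have GC: "\<And>H. H \<in> A \<Longrightarrow> sigma H G = Zero \<or> sigma H G = sigma H C"
              by (rule sub_le[OF arr G(1) Cf face_of_imp_subset[OF G(2)]])
            define C' where "C' = T G"
            have C'D: "C' \<in> \<Delta>" unfolding C'_def using cl GD by blast
            have C'r: "C' \<in> regions A" unfolding C'_def by (rule Treg[OF G(1)])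
            have wl: "separating A B C \<subseteq> separating A B D" using CD(4) by (simp add: weak_le_def)
            have zcase: "sigma H C = sigma H B \<and> sigma H C' = sigma H D"
              if H: "H \<in> A" "sigma H G = Zero" for H
            proof -
              have cd: "sigma H C \<noteq> sigma H D" using sep H by blast
              have nz: "sigma H C \<noteq> Zero" "sigma H D \<noteq> Zero" "sigma H B \<noteq> Zero"
                using region_total[OF arr CD(2) H(1)] region_total[OF arr D H(1)] Bt[OF H(1)] by auto
              have cb: "sigma H C = sigma H B"
              proof (rule ccontr)
                assume "sigma H C \<noteq> sigma H B"
                then have "H \<in> separating A B C" using H(1) unfolding separating_def by auto
                then have "H \<in> separating A B D" using wl by blast
                then have "sigma H B \<noteq> sigma H D" unfolding separating_def by simp
                then show False using sgn3[OF nz(3) nz(1) nz(2)] cd \<open>sigma H C \<noteq> sigma H B\<close> by metis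
              qed
              have "sigma H D = flip (sigma H B)" using sgn_flip[OF nz(3) nz(2)] cd cb by simp
              moreover have "sigma H C' = flip (sigma H B)" unfolding C'_def using Tsig[OF G(1) H(1)] H(2) by simp
              ultimately show ?thesis using cb by simp
            qed
            have nzcase: "sigma H C' = sigma H C" if H: "H \<in> A" "sigma H G \<noteq> Zero" for H
              unfolding C'_def using Tsig[OF G(1) H(1)] H(2) GC[OF H(1)] by simp
            have sepeq: "separating A C' D = separating A C D - {H\<in>A. sigma H G = Zero}"
            proof (rule set_eqI)
              fix H
              show "H \<in> separating A C' D \<longleftrightarrow> H \<in> separating A C D - {H\<in>A. sigma H G = Zero}"
              proof (cases "H \<in> A")
                case True
                show ?thesis
                proof (cases "sigma H G = Zero")
                  case z: True
                  then show ?thesis using zcase[OF True z] unfolding separating_def by simp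
                next
                  case nz: False
                  then show ?thesis using nzcase[OF True nz] unfolding separating_def by simp
                qed
              next
                case False then show ?thesis unfolding separating_def by simp
              qed
            qed
            obtain H0 where H0A: "H0 \<in> A" "sigma H0 G = Zero" using H0 by blast
            have "H0 \<in> separating A C D" using sep H0A unfolding separating_def by blast
            then have ps: "separating A C' D \<subset> separating A C D" using H0A unfolding sepeq by blast
            have finS: "finite (separating A C D)" using fin unfolding separating_def by simp
            have lt: "card (separating A C' D) < n" using psubset_card_mono[OF finS ps] CD(3) by simp
            have w': "weak_le A B C' D" unfolding weak_le_def
            proof
              fix H assume Hs: "H \<in> separating A B C'"
              then have HA: "H \<in> A" and bc: "sigma H B \<noteq> sigma H C'" unfolding separating_def by auto
              show "H \<in> separating A B D"
              proof (cases "sigma H G = Zero")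
                case True
                then show ?thesis using zcase[OF HA True] bc HA unfolding separating_def by simp
              next
                case False
                then have "H \<in> separating A B C" using nzcase[OF HA False] bc HA unfolding separating_def by simp
                then show ?thesis using wl by blast
              qed
            qed
            show ?thesis using less.IH[OF lt] C'D C'r w' by blast
          qed
        qed
      qed
      then show "D \<in> \<Delta> \<inter> regions A" using C w D by blast
    qed
    show "pure \<Delta> \<and> \<Delta> \<inter> regions A \<noteq> {} \<and> upper_set A B (\<Delta> \<inter> regions A)"
      using pu ne up by blast
  next
    assume rhs: "pure \<Delta> \<and> \<Delta> \<inter> regions A \<noteq> {} \<and> upper_set A B (\<Delta> \<inter> regions A)"
    then obtain R0 where R0: "R0 \<in> \<Delta>" "R0 \<in> regions A" by blast
    have pu: "pure \<Delta>" and up: "upper_set A B (\<Delta> \<inter> regions A)" using rhs by blast+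
    show "\<forall>F\<in>\<Delta>. T F \<in> \<Delta>"
    proof
      fix F assume F: "F \<in> \<Delta>"
      have Ff: "F \<in> faces A" using F sub by blast
      obtain M where M: "M \<in> \<Delta>" "F \<subseteq> M" "\<forall>K\<in>\<Delta>. M \<subseteq> K \<longrightarrow> K = M"
        using max_elem[OF arr sub F] by blast
      have Mf: "M \<in> faces A" using M sub by blast
      have R0m: "\<forall>K\<in>\<Delta>. R0 \<subseteq> K \<longrightarrow> K = R0" by (rule region_max[OF arr sub R0(2)])
      have "aff_dim M = aff_dim R0" using pu M(1) R0(1) M(3) R0m unfolding pure_def by blast
      then have adM: "aff_dim M = DIM('a)" using region_aff_dim[OF arr R0(2)] by simp
      have Mr: "M \<in> regions A"
      proof (rule total_region[OF arr Mf])
        fix H assume H: "H \<in> A"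
        show "sigma H M \<noteq> Zero"
        proof
          assume "sigma H M = Zero"
          from nonregion_aff_dim[OF arr Mf H this] adM show False by simp
        qed
      qed
      have TFr: "T F \<in> regions A" by (rule Treg[OF Ff])
      have w: "weak_le A B M (T F)" unfolding weak_le_def
      proof
        fix H assume "H \<in> separating A B M"
        then have HA: "H \<in> A" and bm: "sigma H B \<noteq> sigma H M" unfolding separating_def by auto
        have "sigma H B \<noteq> sigma H (T F)"
        proof (cases "sigma H F = Zero")
          case True
          then show ?thesis using Tsig[OF Ff HA] flip_ne[OF Bt[OF HA]] by simp
        next
          case False
          then have "sigma H F = sigma H M" using sub_le[OF arr Ff Mf M(2) HA] by simp
          then show ?thesis using Tsig[OF Ff HA] False bm by simp
        qed
        then show "H \<in> separating A B (T F)" using HA unfolding separating_def by simp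
      qed
      have "M \<in> \<Delta> \<inter> regions A" using M(1) Mr by blast
      then have "T F \<in> \<Delta> \<inter> regions A" using up TFr w unfolding upper_set_def by blast
      then show "T F \<in> \<Delta>" by blast
    qed
  qed
qed

end
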